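(* Let $w\in\mathbb{R}^n$ have positive entries with $\max_{i,j}w_i/w_j\le b$, let $\widehat W\in\mathbb{R}^n$ have positive entries, set $\rho_{ij}=w_i/w_j$, and let $s_{ij}\ge0$ ($i,j=1,\dots,n$) be such that $$\left[\frac{\widehat W_i}{\widehat W_j}-\rho_{ij}\right]^2\le\rho_{ij}^2\,s_{ij}\quad\text{for all }i,j.$$ Then for every $\ell\in\{1,\dots,n\}$, $\sin(w,\widehat W)^2\le\max_j s_{j\ell}$, and moreover $\sin(w,\widehat W)^2\le b^2 s_{\rm avg}$, where $s_{\rm avg}=\frac1{n^2}\sum_{a,c=1}^n s_{ac}$.
   Context: $\sin(x,y)$ denotes the sine of the angle between nonzero vectors $x,y\in\mathbb{R}^n$. *)

theory Defs
  imports "HOL-Analysis.Analysis"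
begin

definition vec_angle :: "'a::real_inner \<Rightarrow> 'a \<Rightarrow> real" where
  "vec_angle x y = arccos ((x \<bullet> y) / (norm x * norm y))"

definition vec_sin :: "'a::real_inner \<Rightarrow> 'a \<Rightarrow> real" where
  "vec_sin x y = sin (vec_angle x y)"

end

theory Submission
  imports Defs
begin

lemma key:
  fixes x y :: "'a::real_inner"
  assumes "y \<noteq> 0" "x \<noteq> 0"
  shows "(vec_sin x y)\<^sup>2 * (norm x)\<^sup>2 \<le> (norm (x - t *\<^sub>R y))\<^sup>2"
proof -
  define c where "c = (x \<bullet> y) / (norm x * norm y)"
  have nx: "norm x > 0" and ny: "norm y > 0" using assms by auto
  have "\<bar>x \<bullet> y\<bar> \<le> norm x * norm y" by (rule Cauchy_Schwarz_ineq2)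
  hence "\<bar>c\<bar> \<le> 1" using nx ny unfolding c_def by (simp add: abs_divide divide_le_eq_1)
  hence c1: "-1 \<le> c" "c \<le> 1" by auto
  have s: "(vec_sin x y)\<^sup>2 = 1 - c\<^sup>2"
    unfolding vec_sin_def vec_angle_def c_def[symmetric] using c1
    by (simp add: sin_arccos abs_square_le_1)
  have e1: "(1 - c\<^sup>2) * (norm x)\<^sup>2 = (norm x)\<^sup>2 - (x \<bullet> y)\<^sup>2 / (norm y)\<^sup>2"
    using nx ny unfolding c_def by (simp add: field_simps power2_eq_square)
  have e2: "(norm (x - t *\<^sub>R y))\<^sup>2 = (norm x)\<^sup>2 - 2 * t * (x \<bullet> y) + t\<^sup>2 * (norm y)\<^sup>2"
    unfolding power2_norm_eq_inner
    by (simp add: inner_diff_left inner_diff_right inner_commute algebra_simps power2_eq_square)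
  have "(norm x)\<^sup>2 - (x \<bullet> y)\<^sup>2 / (norm y)\<^sup>2 \<le> (norm x)\<^sup>2 - 2 * t * (x \<bullet> y) + t\<^sup>2 * (norm y)\<^sup>2"
  proof -
    have "0 \<le> (t * (norm y)\<^sup>2 - x \<bullet> y)\<^sup>2 / (norm y)\<^sup>2" by simp
    also have "\<dots> = t\<^sup>2 * (norm y)\<^sup>2 - 2 * t * (x \<bullet> y) + (x \<bullet> y)\<^sup>2 / (norm y)\<^sup>2"
      using ny by (simp add: field_simps power2_eq_square)
    finally show ?thesis by linarith
  qed
  thus ?thesis using s e1 e2 by simp
qed

lemma normsq_vec: "(norm (v :: real ^ 'n))\<^sup>2 = (\<Sum>i\<in>UNIV. (v $ i)\<^sup>2)"
  unfolding power2_norm_eq_inner inner_vec_def by (simp add: power2_eq_square)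

theorem lemma7:
  fixes w W :: "real ^ 'n" and b :: real and s :: "'n \<Rightarrow> 'n \<Rightarrow> real"
  assumes wpos: "\<And>i. w $ i > 0"
    and bbound: "\<And>i j. w $ i / w $ j \<le> b"
    and Wpos: "\<And>i. W $ i > 0"
    and snonneg: "\<And>i j. s i j \<ge> 0"
    and hyp: "\<And>i j. (W $ i / W $ j - w $ i / w $ j)\<^sup>2 \<le> (w $ i / w $ j)\<^sup>2 * s i j"
  shows "(\<forall>l. (vec_sin w W)\<^sup>2 \<le> (MAX j. s j l))
    \<and> (vec_sin w W)\<^sup>2 \<le> b\<^sup>2 * ((1 / (real CARD('n))\<^sup>2) * (\<Sum>a\<in>UNIV. \<Sum>c\<in>UNIV. s a c))"
proof -
  obtain k :: 'n where True by simp
  have w0: "w \<noteq> 0" proof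
    assume "w = 0" thus False using wpos[of k] by simp
  qed
  have W0: "W \<noteq> 0" proof
    assume "W = 0" thus False using Wpos[of k] by simp
  qed
  define S where "S = (vec_sin w W)\<^sup>2"
  define N where "N = (norm w)\<^sup>2"
  have Npos: "N > 0" using w0 unfolding N_def by simp
  have L: "S * N \<le> (\<Sum>i\<in>UNIV. (w $ i)\<^sup>2 * s i l)" for l
  proof -
    have "S * N \<le> (norm (w - (w $ l / W $ l) *\<^sub>R W))\<^sup>2"
      unfolding S_def N_def by (rule key[OF W0 w0])
    also have "\<dots> = (\<Sum>i\<in>UNIV. (w $ i - (w $ l / W $ l) * W $ i)\<^sup>2)"
      by (simp add: normsq_vec)
    also have "\<dots> \<le> (\<Sum>i\<in>UNIV. (w $ i)\<^sup>2 * s i l)"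
    proof (rule sum_mono)
      fix i
      have h: "(W $ i / W $ l - w $ i / w $ l)\<^sup>2 \<le> (w $ i / w $ l)\<^sup>2 * s i l" by (rule hyp)
      have a: "(w $ i - (w $ l / W $ l) * W $ i)\<^sup>2 = (w $ l)\<^sup>2 * (W $ i / W $ l - w $ i / w $ l)\<^sup>2"
        using wpos[of l] Wpos[of l] by (simp add: field_simps power2_eq_square)
      have b: "(w $ i)\<^sup>2 * s i l = (w $ l)\<^sup>2 * ((w $ i / w $ l)\<^sup>2 * s i l)"
        using wpos[of l] by (simp add: field_simps power2_eq_square)
      show "(w $ i - (w $ l / W $ l) * W $ i)\<^sup>2 \<le> (w $ i)\<^sup>2 * s i l"
        unfolding a b by (rule mult_left_mono[OF h]) simp
    qed
    finally show ?thesis .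
  qed
  have part1: "S \<le> (MAX j. s j l)" for l
  proof -
    have "S * N \<le> (\<Sum>i\<in>UNIV. (w $ i)\<^sup>2 * s i l)" by (rule L)
    also have "\<dots> \<le> (\<Sum>i\<in>UNIV. (w $ i)\<^sup>2 * (MAX j. s j l))"
      by (rule sum_mono, rule mult_left_mono) auto
    also have "\<dots> = (MAX j. s j l) * N"
      unfolding N_def normsq_vec by (simp add: sum_distrib_left mult.commute)
    finally show ?thesis using Npos by simp
  qed
  define n where "n = real CARD('n)"
  have npos: "n > 0" unfolding n_def by simp
  have wb: "(w $ i)\<^sup>2 * n \<le> b\<^sup>2 * N" for i
  proof -
    have "(w $ i)\<^sup>2 \<le> b\<^sup>2 * (w $ j)\<^sup>2" for j
    proof -
      have "w $ i \<le> b * w $ j" using bbound[of i j] wpos[of j] by (simp add: divide_le_eq)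
      moreover have "0 \<le> w $ i" using wpos[of i] by simp
      ultimately have "(w $ i)\<^sup>2 \<le> (b * w $ j)\<^sup>2" by (rule power_mono)
      thus ?thesis by (simp add: power_mult_distrib)
    qed
    hence "(\<Sum>j\<in>(UNIV::'n set). (w $ i)\<^sup>2) \<le> (\<Sum>j\<in>UNIV. b\<^sup>2 * (w $ j)\<^sup>2)" by (rule sum_mono)
    thus ?thesis unfolding N_def normsq_vec n_def by (simp add: sum_distrib_left mult.commute)
  qed
  have "S * N * n = (\<Sum>l\<in>(UNIV::'n set). S * N)" unfolding n_def by simp
  also have "\<dots> \<le> (\<Sum>l\<in>UNIV. \<Sum>i\<in>UNIV. (w $ i)\<^sup>2 * s i l)" by (rule sum_mono, rule L)
  also have "\<dots> = (\<Sum>i\<in>UNIV. \<Sum>l\<in>UNIV. (w $ i)\<^sup>2 * s i l)" by (rule sum.swap)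
  also have "\<dots> \<le> (\<Sum>i\<in>UNIV. \<Sum>l\<in>UNIV. (b\<^sup>2 * N / n) * s i l)"
  proof (rule sum_mono, rule sum_mono)
    fix i l
    have "(w $ i)\<^sup>2 \<le> b\<^sup>2 * N / n" using wb[of i] npos by (simp add: le_divide_eq)
    thus "(w $ i)\<^sup>2 * s i l \<le> (b\<^sup>2 * N / n) * s i l" by (rule mult_right_mono) (rule snonneg)
  qed
  also have "\<dots> = (b\<^sup>2 * N / n) * (\<Sum>a\<in>UNIV. \<Sum>c\<in>UNIV. s a c)"
    by (simp add: sum_distrib_left)
  finally have "S * N * n \<le> (b\<^sup>2 * N / n) * (\<Sum>a\<in>UNIV. \<Sum>c\<in>UNIV. s a c)" .
  hence "S * n * n \<le> b\<^sup>2 * (\<Sum>a\<in>UNIV. \<Sum>c\<in>UNIV. s a c)"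
    using Npos npos by (simp add: field_simps)
  hence "S \<le> b\<^sup>2 * ((1 / n\<^sup>2) * (\<Sum>a\<in>UNIV. \<Sum>c\<in>UNIV. s a c))"
    using npos by (simp add: field_simps power2_eq_square)
  thus ?thesis using part1 unfolding S_def n_def by blast
qed

end
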